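(* There exist an integer $d \ge 1$ and two finite graphs $G_1, G_2$ with distinguished nodes $u_1 \in V(G_1)$, $u_2 \in V(G_2)$, all nodes carrying the same (identical) feature, such that the $d$-hop neighborhoods $N_d(u_1)$ and $N_d(u_2)$ are not isomorphic as rooted graphs (rooted at $u_1$, $u_2$), and yet for each $k \in \{1,2\}$ the multisets $$\big\{\!\!\big\{\, T_d\big(N_d(u_i) - S,\, u_i\big) \;:\; S \subseteq V(N_d(u_i)) \setminus \{u_i\},\ |S| = k \,\big\}\!\!\big\}, \qquad i = 1,2,$$ coincide (where trees are compared up to isomorphism of rooted trees).
   Context: For a graph $G$ and node $u$, the $d$-hop neighborhood $N_d(u)$ is the graph whose nodes are all nodes at distance at most $d$ from $u$, and whose edges are all edges of $G$ between these nodes except those edges whose both endpoints are at distance exactly $d$ from $u$; it is regarded as rooted at $u$. For a graph $H$ and $S \subseteq V(H)$, $H - S$ denotes $H$ with the nodes of $S$ and their incident edges removed. The depth-$d$ unfolding (computation) tree $T_d(H, v)$ of a node $v$ of $H$ is defined recursively: $T_0(H,v)$ is a single root node, and $T_d(H,v)$ is a root node whose children are the roots of the trees $T_{d-1}(H,w)$, one for each neighbor $w$ of $v$ in $H$. $T_d(H - S, u)$ describes exactly what $u$ can observe after $d$ rounds of message passing (with sum aggregation, i.e. equivalently to the Weisfeiler–Lehman test) in a run of a dropout GNN in which exactly the nodes of $S$ are dropped; a subset $S$ of size $k$ dropped is called a $k$-dropout. *)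

theory Defs
  imports Main "HOL-Library.Multiset"
begin

type_synonym 'a graph = "'a set \<times> ('a \<Rightarrow> 'a \<Rightarrow> bool)"

definition verts :: "'a graph \<Rightarrow> 'a set" where "verts G = fst G"
definition adj :: "'a graph \<Rightarrow> 'a \<Rightarrow> 'a \<Rightarrow> bool" where "adj G = snd G"

definition finite_graph :: "'a graph \<Rightarrow> bool" where
  "finite_graph G \<longleftrightarrow> finite (verts G)
     \<and> (\<forall>x y. adj G x y \<longrightarrow> x \<in> verts G \<and> y \<in> verts G)
     \<and> (\<forall>x y. adj G x y \<longrightarrow> adj G y x)
     \<and> (\<forall>x. \<not> adj G x x)"

fun within :: "'a graph \<Rightarrow> 'a \<Rightarrow> nat \<Rightarrow> 'a \<Rightarrow> bool" where
  "within G u 0 v \<longleftrightarrow> v = u \<and> u \<in> verts G"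
| "within G u (Suc k) v \<longleftrightarrow> within G u k v \<or> (\<exists>w. within G u k w \<and> adj G w v \<and> v \<in> verts G)"

definition dist_exactly :: "'a graph \<Rightarrow> 'a \<Rightarrow> nat \<Rightarrow> 'a \<Rightarrow> bool" where
  "dist_exactly G u d v \<longleftrightarrow> within G u d v \<and> (d = 0 \<or> \<not> within G u (d - 1) v)"

definition nbhd :: "'a graph \<Rightarrow> 'a \<Rightarrow> nat \<Rightarrow> 'a graph" where
  "nbhd G u d = ({v. within G u d v},
     (\<lambda>x y. adj G x y \<and> within G u d x \<and> within G u d y
            \<and> \<not> (dist_exactly G u d x \<and> dist_exactly G u d y)))"

definition del_nodes :: "'a graph \<Rightarrow> 'a set \<Rightarrow> 'a graph" where
  "del_nodes H S = (verts H - S, (\<lambda>x y. adj H x y \<and> x \<notin> S \<and> y \<notin> S))"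

definition rooted_iso :: "'a graph \<Rightarrow> 'a \<Rightarrow> 'b graph \<Rightarrow> 'b \<Rightarrow> bool" where
  "rooted_iso G u H v \<longleftrightarrow> (\<exists>f. bij_betw f (verts G) (verts H) \<and> f u = v
      \<and> (\<forall>x\<in>verts G. \<forall>y\<in>verts G. adj G x y \<longleftrightarrow> adj H (f x) (f y)))"

text \<open>Unordered rooted trees up to isomorphism: a node is the multiset of its child subtrees.
  Two rooted trees are isomorphic iff their representations are equal.\<close>
datatype utree = UNode "utree multiset"

fun unfold_tree :: "nat \<Rightarrow> 'a graph \<Rightarrow> 'a \<Rightarrow> utree" where
  "unfold_tree 0 H v = UNode {#}"
| "unfold_tree (Suc d) H v =
     UNode (image_mset (\<lambda>w. unfold_tree d H w) (mset_set {w \<in> verts H. adj H v w}))"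

definition dropout_trees :: "'a graph \<Rightarrow> 'a \<Rightarrow> nat \<Rightarrow> nat \<Rightarrow> utree multiset" where
  "dropout_trees G u d k =
     (let N = nbhd G u d in
      image_mset (\<lambda>S. unfold_tree d (del_nodes N S) u)
        (mset_set {S. S \<subseteq> verts N - {u} \<and> card S = k}))"

end

theory Submission imports Defs begin

fun W :: "'a graph \<Rightarrow> 'a \<Rightarrow> nat \<Rightarrow> 'a set" where
  "W G u 0 = {u} \<inter> verts G"
| "W G u (Suc k) = W G u k \<union> {v \<in> verts G. \<exists>w\<in>W G u k. adj G w v}"

lemma within_W: "within G u k v \<longleftrightarrow> v \<in> W G u k"
  by (induction k arbitrary: v) auto

definition E1 :: "(nat \<times> nat) list" where
  "E1 = map (\<lambda>i. (0,i)) [1..<11] @ [(1,2),(2,3),(3,4),(4,5),(5,1),(6,7),(7,8),(8,9),(9,10),(10,6)]"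
definition E2 :: "(nat \<times> nat) list" where
  "E2 = map (\<lambda>i. (0,i)) [1..<11] @ map (\<lambda>i. (i, i mod 10 + 1)) [1..<11]"
definition mkg :: "(nat \<times> nat) list \<Rightarrow> nat graph" where
  "mkg E = (set [0..<11], \<lambda>x y. (x,y) \<in> set E \<or> (y,x) \<in> set E)"

lemma nbhd_W: "nbhd G u d = ({v. v \<in> W G u d},
     (\<lambda>x y. adj G x y \<and> x \<in> W G u d \<and> y \<in> W G u d
            \<and> \<not> ((x \<in> W G u d \<and> (d = 0 \<or> x \<notin> W G u (d - 1))) \<and> (y \<in> W G u d \<and> (d = 0 \<or> y \<notin> W G u (d - 1))))))"
  unfolding nbhd_def dist_exactly_def within_W ..

lemma dt2: "dropout_trees G u d k = image_mset (\<lambda>S. unfold_tree d (del_nodes (nbhd G u d) S) u)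
   (mset_set {S. S \<subseteq> verts (nbhd G u d) - {u} \<and> card S = k})"
  by (simp add: dropout_trees_def Let_def)

lemma sub1: "{S. S \<subseteq> A \<and> card S = 1} = (\<lambda>v. {v}) ` A"
  by (auto simp: card_1_singleton_iff)

lemma sub2: "{S. S \<subseteq> (A::nat set) \<and> card S = 2} = {{a,b}| a b. a \<in> A \<and> b \<in> A \<and> a < b}"
proof (rule set_eqI, rule iffI)
  fix S assume "S \<in> {S. S \<subseteq> A \<and> card S = 2}"
  then have sA: "S \<subseteq> A" and c: "card S = 2" by auto
  then obtain x y where xy: "S = {x, y}" "x \<noteq> y" by (auto simp: card_2_iff)
  show "S \<in> {{a,b}| a b. a \<in> A \<and> b \<in> A \<and> a < b}"
  proof (cases "x < y")
    case True then show ?thesis using xy sA by blast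
  next
    case False then have "y < x" using xy(2) by simp
    moreover have "S = {y, x}" using xy(1) by blast
    ultimately show ?thesis using sA by blast
  qed
next
  fix S assume "S \<in> {{a,b}| a b. a \<in> A \<and> b \<in> A \<and> a < b}"
  then show "S \<in> {S. S \<subseteq> A \<and> card S = 2}" by auto
qed

definition L1 :: "nat set list" where "L1 = map (\<lambda>v. {v}) [1..<11]"
definition L2 :: "nat set list" where "L2 = concat (map (\<lambda>a. map (\<lambda>b. {a,b}) [a+1..<11]) [1..<11])"

lemma W1a: "W (mkg E1) 0 1 = set [0..<11]" by code_simp
lemma W1b: "W (mkg E1) 0 2 = set [0..<11]" by code_simp
lemma W2a: "W (mkg E2) 0 1 = set [0..<11]" by code_simp
lemma W2b: "W (mkg E2) 0 2 = set [0..<11]" by code_simp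

lemma vmkg: "verts (mkg E) = set [0..<11]" by (simp add: verts_def mkg_def)
lemma adjb: "\<forall>(x,y)\<in>set E. x < 11 \<and> y < 11 \<Longrightarrow> adj (mkg E) x y \<Longrightarrow> x < 11 \<and> y < 11"
  unfolding adj_def mkg_def by auto
lemma bE1: "\<forall>(x,y)\<in>set E1. x < (11::nat) \<and> y < 11" by (simp add: E1_def)
lemma bE2: "\<forall>(x,y)\<in>set E2. x < (11::nat) \<and> y < 11" by code_simp

lemma N1: "nbhd (mkg E1) 0 2 = (set [0..<11], adj (mkg E1))"
  unfolding nbhd_W
  by (auto simp: W1a W1a[unfolded One_nat_def] W1b vmkg fun_eq_iff simp del: W.simps dest: adjb[OF bE1])
lemma N2: "nbhd (mkg E2) 0 2 = (set [0..<11], adj (mkg E2))"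
  unfolding nbhd_W
  by (auto simp: W2a W2a[unfolded One_nat_def] W2b vmkg fun_eq_iff simp del: W.simps dest: adjb[OF bE2])

lemma S1: "{S. S \<subseteq> set [1..<11] \<and> card S = 1} = set L1"
  unfolding sub1 L1_def by simp
lemma S2: "{S. S \<subseteq> set [1..<11] \<and> card S = 2} = set L2"
  unfolding sub2 L2_def set_concat set_map
  apply (rule set_eqI)
  apply (simp only: mem_Collect_eq UN_iff image_iff set_upt atLeastLessThan_iff)
  by fastforce
lemma vv: "set [0..<11] - {0::nat} = set [1..<11]" by auto
lemma dL1: "distinct L1" by code_simp
lemma dL2: "distinct L2" by code_simp

lemma D1: "dropout_trees (mkg E1) 0 2 1 = dropout_trees (mkg E2) 0 2 1"
  unfolding dt2 N1 N2 verts_def fst_conv vv S1 mset_set_set[OF dL1]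
  by code_simp
lemma D2: "dropout_trees (mkg E1) 0 2 2 = dropout_trees (mkg E2) 0 2 2"
  unfolding dt2 N1 N2 verts_def fst_conv vv S2 mset_set_set[OF dL2]
  by code_simp

lemma par: "\<forall>x\<in>set [1..<11]. \<forall>y\<in>set [1..<11]. adj (mkg E2) x y \<longrightarrow> odd (x+y)"
  by code_simp

lemma noniso: "\<not> rooted_iso (nbhd (mkg E1) 0 2) 0 (nbhd (mkg E2) 0 2) 0"
proof
  assume "rooted_iso (nbhd (mkg E1) 0 2) 0 (nbhd (mkg E2) 0 2) 0"
  then obtain f where b: "bij_betw f (set [0..<11]) (set [0..<11])" and f0: "f 0 = 0"
    and a: "\<forall>x\<in>set [0..<11]. \<forall>y\<in>set [0..<11]. adj (mkg E1) x y \<longleftrightarrow> adj (mkg E2) (f x) (f y)"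
    unfolding rooted_iso_def N1 N2 verts_def adj_def[of "(_, _)"] fst_conv snd_conv by blast
  have inj: "inj_on f (set [0..<11])" using b bij_betw_def by blast
  have im: "\<And>x. x \<in> set [0..<11] \<Longrightarrow> f x \<in> set [0..<11]" using b bij_betwE by blast
  have nz: "\<And>x. x \<in> set [1..<11] \<Longrightarrow> f x \<in> set [1..<11]"
  proof -
    fix x :: nat assume x: "x \<in> set [1..<11]"
    then have x0: "x \<in> set [0..<11]" "x \<noteq> 0" by auto
    have "f x \<noteq> 0"
    proof
      assume "f x = 0"
      then have "x = 0" using inj_onD[OF inj, of x 0] f0 x0(1) by simp
      then show False using x0(2) by simp
    qed
    then show "f x \<in> set [1..<11]" using im[OF x0(1)] by auto
  qed
  have e: "adj (mkg E1) 1 2" "adj (mkg E1) 2 3" "adj (mkg E1) 3 4" "adj (mkg E1) 4 5" "adj (mkg E1) 5 1"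
    by (simp_all add: adj_def mkg_def E1_def)
  have m: "(1::nat) \<in> set [1..<11]" "(2::nat) \<in> set [1..<11]" "(3::nat) \<in> set [1..<11]"
     "(4::nat) \<in> set [1..<11]" "(5::nat) \<in> set [1..<11]" by auto
  have m0: "(1::nat) \<in> set [0..<11]" "(2::nat) \<in> set [0..<11]" "(3::nat) \<in> set [0..<11]"
     "(4::nat) \<in> set [0..<11]" "(5::nat) \<in> set [0..<11]" by auto
  have o: "odd (f 1 + f 2)" "odd (f 2 + f 3)" "odd (f 3 + f 4)" "odd (f 4 + f 5)" "odd (f 5 + f 1)"
    using par nz[OF m(1)] nz[OF m(2)] nz[OF m(3)] nz[OF m(4)] nz[OF m(5)] a m0 e by blast+
  then show False by presburger
qed

lemma fgE: "(\<forall>(x,y)\<in>set E. x < 11 \<and> y < 11 \<and> x \<noteq> y) \<Longrightarrow> finite_graph (mkg E)"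
  unfolding finite_graph_def verts_def adj_def mkg_def by auto
lemma fg1: "finite_graph (mkg E1)"
  by (rule fgE) (simp add: E1_def)
lemma fg2: "finite_graph (mkg E2)"
  by (rule fgE) code_simp

theorem theorem3:
  shows "\<exists>(d::nat) (G1::nat graph) (G2::nat graph) u1 u2.
     d \<ge> 1 \<and> finite_graph G1 \<and> finite_graph G2
     \<and> u1 \<in> verts G1 \<and> u2 \<in> verts G2
     \<and> \<not> rooted_iso (nbhd G1 u1 d) u1 (nbhd G2 u2 d) u2
     \<and> (\<forall>k\<in>{1, 2}. dropout_trees G1 u1 d k = dropout_trees G2 u2 d k)"
proof -
  have "(2::nat) \<ge> 1 \<and> finite_graph (mkg E1) \<and> finite_graph (mkg E2)
     \<and> (0::nat) \<in> verts (mkg E1) \<and> (0::nat) \<in> verts (mkg E2)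
     \<and> \<not> rooted_iso (nbhd (mkg E1) 0 2) 0 (nbhd (mkg E2) 0 2) 0
     \<and> (\<forall>k\<in>{1, 2}. dropout_trees (mkg E1) 0 2 k = dropout_trees (mkg E2) 0 2 k)"
  proof (intro conjI)
  show "(1::nat) \<le> 2" by simp
  show "finite_graph (mkg E1)" by (rule fg1)
  show "finite_graph (mkg E2)" by (rule fg2)
  show "(0::nat) \<in> verts (mkg E1)" by (simp add: verts_def mkg_def)
  show "(0::nat) \<in> verts (mkg E2)" by (simp add: verts_def mkg_def)
  show "\<not> rooted_iso (nbhd (mkg E1) 0 2) 0 (nbhd (mkg E2) 0 2) 0" by (rule noniso)
  show "\<forall>k\<in>{1, 2}. dropout_trees (mkg E1) 0 2 k = dropout_trees (mkg E2) 0 2 k"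
    using D1 D2 by simp
  qed
  then show ?thesis by blast
qed

end
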